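(* Let $c>1$, $P\in[0,1]^{m\times p}$, $W\in\mathbb{R}^{m\times n}$, $U\in\mathbb{Z}_+^{n\times p}$, and for $\delta\in(0,1]$ let $\gamma_k:=12\log(2np/\delta)\max_{\ell\in[p]}\sqrt{1/U_{k\ell}}$ for $k\in[n]$. For any $\delta\in(0,1]$, any ranking $R\in\mathcal{R}$ satisfying $$\forall\ell\in[p],\ \forall k\in[n]:\ \sum_{i\in[m]}\sum_{j\in[k]}P_{i\ell}R_{ij}\le U_{k\ell}\Big(1+\Big(1-\frac1{2\sqrt c}\Big)\gamma_k\Big)$$ satisfies the $(c\gamma,\delta)$-constraint.
   Context: $\mathcal{R}$ is the set of rankings: matrices $R\in\{0,1\}^{m\times n}$ with $\sum_{j} R_{ij}\le 1$ for every item $i\in[m]$ and $\sum_{i} R_{ij}=1$ for every position $j\in[n]$. Noise model: the groups $G_1,\dots,G_p\subseteq[m]$ are random with $\Pr[i\in G_\ell]=P_{i\ell}$, and events concerning distinct items are independent. For $\varepsilon\in\mathbb{R}^n_{\ge0}$, a ranking $R$ satisfies the $(\varepsilon,\delta)$-constraint if with probability at least $1-\delta$ over the groups, $\sum_{i\in G_\ell}\sum_{j=1}^k R_{ij}\le U_{k\ell}(1+\varepsilon_k)$ for all $k\in[n],\ell\in[p]$. *)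

theory Defs
  imports "HOL-Probability.Probability"
begin

(* Conventions: items i \<in> {1..m}, positions j \<in> {1..n}, groups l \<in> {1..p} (1-based).
   A ranking is an m x n 0/1 matrix, given as a function R i j. *)

definition is_ranking :: "nat \<Rightarrow> nat \<Rightarrow> (nat \<Rightarrow> nat \<Rightarrow> real) \<Rightarrow> bool" where
  "is_ranking m n R \<longleftrightarrow>
     (\<forall>i\<in>{1..m}. \<forall>j\<in>{1..n}. R i j \<in> {0, 1}) \<and>
     (\<forall>i\<in>{1..m}. (\<Sum>j\<in>{1..n}. R i j) \<le> 1) \<and>
     (\<forall>j\<in>{1..n}. (\<Sum>i\<in>{1..m}. R i j) = 1)"

(* Noise model: item i independently draws the set D i of groups it belongs to
   (membership of one item in different groups may be arbitrarily correlated);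
   the marginals are Pr[i \<in> G_l] = P i l. *)
definition noise_model :: "nat \<Rightarrow> nat \<Rightarrow> (nat \<Rightarrow> nat \<Rightarrow> real) \<Rightarrow> (nat \<Rightarrow> nat set pmf) \<Rightarrow> bool" where
  "noise_model m p P D \<longleftrightarrow>
     (\<forall>i\<in>{1..m}. \<forall>l\<in>{1..p}. measure_pmf.prob (D i) {S. l \<in> S} = P i l)"

definition groups_dist :: "nat \<Rightarrow> (nat \<Rightarrow> nat set pmf) \<Rightarrow> (nat \<Rightarrow> nat set) pmf" where
  "groups_dist m D = Pi_pmf {1..m} {} D"

definition group_of :: "nat \<Rightarrow> (nat \<Rightarrow> nat set) \<Rightarrow> nat \<Rightarrow> nat set" where
  "group_of m \<omega> l = {i\<in>{1..m}. l \<in> \<omega> i}"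

definition satisfies_constraint ::
  "nat \<Rightarrow> nat \<Rightarrow> nat \<Rightarrow> (nat \<Rightarrow> nat \<Rightarrow> nat) \<Rightarrow> (nat \<Rightarrow> nat \<Rightarrow> real)
   \<Rightarrow> (nat \<Rightarrow> nat set pmf) \<Rightarrow> (nat \<Rightarrow> real) \<Rightarrow> real \<Rightarrow> bool" where
  "satisfies_constraint m n p U R D eps \<delta> \<longleftrightarrow>
     measure_pmf.prob (groups_dist m D)
       {\<omega>. \<forall>k\<in>{1..n}. \<forall>l\<in>{1..p}.
           (\<Sum>i\<in>group_of m \<omega> l. \<Sum>j\<in>{1..k}. R i j) \<le> real (U k l) * (1 + eps k)}
     \<ge> 1 - \<delta>"

definition gamma :: "nat \<Rightarrow> nat \<Rightarrow> (nat \<Rightarrow> nat \<Rightarrow> nat) \<Rightarrow> real \<Rightarrow> nat \<Rightarrow> real" where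
  "gamma n p U \<delta> k = 12 * ln (2 * real n * real p / \<delta>) * Max ((\<lambda>l. sqrt (1 / real (U k l))) ` {1..p})"

end

theory Submission
  imports Defs
begin

lemma chernoff_Pi:
  fixes A :: "nat set" and D :: "nat \<Rightarrow> nat set pmf" and a :: "nat \<Rightarrow> real" and lam x :: real
  assumes fin: "finite A" and lam: "lam > 0" and a01: "\<forall>i\<in>A. a i \<in> {0,1}"
  shows "measure_pmf.prob (Pi_pmf A {} D) {\<omega>. (\<Sum>i\<in>A. if l \<in> \<omega> i then a i else 0) > x}
     \<le> exp ((\<Sum>i\<in>A. measure_pmf.prob (D i) {S. l\<in>S} * a i) * (exp lam - 1) - lam * x)"
proof -
  define f where "f i S = exp (lam * (if l \<in> S then a i else 0))" for i S
  define q where "q i = measure_pmf.prob (D i) {S. l\<in>S}" for i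
  let ?M = "measure_pmf (Pi_pmf A {} D)"
  have Y: "exp (lam * (\<Sum>i\<in>A. if l \<in> \<omega> i then a i else 0)) = (\<Prod>i\<in>A. f i (\<omega> i))" for \<omega>
    unfolding f_def by (simp add: sum_distrib_left exp_sum[OF fin])
  have intf: "integrable (measure_pmf (D i)) (f i)" for i
    using lam by (intro measure_pmf.integrable_const_bound[where B="exp (lam * \<bar>a i\<bar>)"])
       (auto simp: f_def abs_mult intro!: mult_left_mono)
  have fnn: "f i S \<ge> 0" for i S by (simp add: f_def)
  have Ef: "measure_pmf.expectation (D i) (f i) = 1 + (exp (lam * a i) - 1) * q i" for i
  proof -
    have "f i = (\<lambda>S. 1 + (exp (lam * a i) - 1) * indicator {S. l \<in> S} S)"
      by (auto simp: f_def fun_eq_iff indicator_def)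
    moreover have "integrable (measure_pmf (D i)) (\<lambda>S. (exp (lam * a i) - 1) * indicator {S. l \<in> S} S :: real)"
      by (intro integrable_mult_right integrable_real_indicator) (auto simp: measure_pmf.emeasure_finite top.not_eq_extremum[symmetric])
    ultimately show ?thesis
      by (simp add: q_def Bochner_Integration.integral_add)
  qed
  have sub: "{\<omega>. (\<Sum>i\<in>A. if l \<in> \<omega> i then a i else 0) > x}
     \<subseteq> {\<omega>\<in>space ?M. (\<Prod>i\<in>A. f i (\<omega> i)) \<ge> exp (lam * x)}"
    using lam by (auto simp flip: Y)
  have "measure_pmf.prob (Pi_pmf A {} D) {\<omega>. (\<Sum>i\<in>A. if l \<in> \<omega> i then a i else 0) > x}
     \<le> measure_pmf.prob (Pi_pmf A {} D) {\<omega>\<in>space ?M. (\<Prod>i\<in>A. f i (\<omega> i)) \<ge> exp (lam * x)}"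
    by (rule measure_pmf.finite_measure_mono[OF sub]) simp
  also have "\<dots> \<le> measure_pmf.expectation (Pi_pmf A {} D) (\<lambda>\<omega>. \<Prod>i\<in>A. f i (\<omega> i)) / exp (lam * x)"
    by (rule integral_Markov_inequality_measure[where A="{}"])
       (auto intro!: integrable_prod_Pi_pmf fin intf prod_nonneg fnn)
  also have "measure_pmf.expectation (Pi_pmf A {} D) (\<lambda>\<omega>. \<Prod>i\<in>A. f i (\<omega> i))
      = (\<Prod>i\<in>A. 1 + (exp (lam * a i) - 1) * q i)"
    by (subst expectation_prod_Pi_pmf) (auto simp: fin intf Ef f_def)
  also have "(\<Prod>i\<in>A. 1 + (exp (lam * a i) - 1) * q i) \<le> (\<Prod>i\<in>A. exp (q i * a i * (exp lam - 1)))"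
  proof (rule prod_mono, safe)
    fix i assume i: "i \<in> A"
    have q0: "q i \<ge> 0" by (simp add: q_def)
    have e: "exp (lam * a i) - 1 = a i * (exp lam - 1)" using a01 i by auto
    have "exp (lam * a i) \<ge> 1" using a01 i lam by auto
    then show "0 \<le> 1 + (exp (lam * a i) - 1) * q i" using q0 by simp
    show "1 + (exp (lam * a i) - 1) * q i \<le> exp (q i * a i * (exp lam - 1))"
    proof -
      have "1 + (exp (lam * a i) - 1) * q i = 1 + q i * a i * (exp lam - 1)" using e by simp
      also have "\<dots> \<le> exp (q i * a i * (exp lam - 1))" by (rule exp_ge_add_one_self)
      finally show ?thesis .
    qed
  qed
  also have "\<dots> = exp ((\<Sum>i\<in>A. q i * a i) * (exp lam - 1))"
    by (simp add: exp_sum[OF fin] sum_distrib_right)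
  finally show ?thesis
    by (simp add: q_def exp_diff divide_right_mono)
qed

lemma arith_bound:
  fixes U M x h L :: real
  assumes U: "U \<ge> 1" and h: "h > 0" and L: "L \<ge> 1/3" and t: "sqrt U * h \<ge> 6 * L"
    and M0: "0 \<le> M" and MU: "M \<le> U * (1 + h)" and xM: "x - M \<ge> U * h"
  shows "M * (exp (h / (2 * (1 + h))) - 1) - (h / (2 * (1 + h))) * x \<le> - L"
proof -
  define lam where "lam = h / (2 * (1 + h))"
  have l0: "0 \<le> lam" and l1: "lam \<le> 1" using h by (auto simp: lam_def field_simps)
  have "exp lam \<le> 1 + lam + lam\<^sup>2" by (rule exp_bound[OF l0 l1])
  hence "M * (exp lam - 1) \<le> M * (lam + lam\<^sup>2)" using M0 by (intro mult_left_mono) auto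
  hence "M * (exp lam - 1) - lam * x \<le> - lam * (x - M) + M * lam\<^sup>2" by (simp add: algebra_simps)
  also have "\<dots> \<le> - lam * (U * h) + U * (1 + h) * lam\<^sup>2"
    using l0 xM MU by (intro add_mono mult_right_mono) (auto intro: mult_left_mono)
  also have "\<dots> = - (U * h\<^sup>2) / (4 * (1 + h))"
  proof -
    have d: "1 + h \<noteq> 0" using h by simp
    show ?thesis unfolding lam_def using d
      by (simp add: power2_eq_square divide_simps) (simp add: algebra_simps)
  qed
  also have "\<dots> \<le> - L"
  proof -
    define t where "t = sqrt U * h"
    have Uh: "U * h\<^sup>2 = t\<^sup>2" using U by (simp add: t_def power_mult_distrib)
    have sU: "sqrt U \<ge> 1" using U by simp
    have ht: "h \<le> t" unfolding t_def using sU h by (simp add: mult_le_cancel_right1)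
    have "t\<^sup>2 \<ge> 4 * L * (1 + t)"
    proof -
      have "t * (t - 4 * L) \<ge> 6 * L * (2 * L)" using t L unfolding t_def[symmetric]
        by (intro mult_mono) auto
      moreover have "L * (3 * L) \<ge> L * 1" using L by (intro mult_left_mono) auto
      ultimately show ?thesis by (simp add: power2_eq_square algebra_simps)
    qed
    also have "4 * L * (1 + t) \<ge> 4 * L * (1 + h)" using ht L by simp
    finally have "U * h\<^sup>2 \<ge> 4 * L * (1 + h)" using Uh by simp
    thus ?thesis using h by (simp add: field_simps)
  qed
  finally show ?thesis by (simp add: lam_def)
qed

lemma ranking_prefix01:
  assumes "is_ranking m n R" "i \<in> {1..m}" "k \<le> n"
  shows "(\<Sum>j\<in>{1..k}. R i j) \<in> {0, 1}"
proof -
  have v: "\<forall>j\<in>{1..n}. R i j \<in> {0,1}" and s1: "(\<Sum>j\<in>{1..n}. R i j) \<le> 1"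
    using assms(1,2) unfolding is_ranking_def by auto
  have "(\<Sum>j\<in>{1..k}. R i j) = (\<Sum>j\<in>{1..k}. if R i j = 1 then 1 else 0)"
    using v assms(3) by (intro sum.cong) auto
  also have "\<dots> = real (card ({1..k} \<inter> {j. R i j = 1}))"
    by (simp add: sum.If_cases)
  finally have eq: "(\<Sum>j\<in>{1..k}. R i j) = real (card ({1..k} \<inter> {j. R i j = 1}))" .
  have "(\<Sum>j\<in>{1..k}. R i j) \<le> (\<Sum>j\<in>{1..n}. R i j)"
  proof (rule sum_mono2)
    show "0 \<le> R i b" if "b \<in> {1..n} - {1..k}" for b
    proof -
      from that have "b \<in> {1..n}" by blast
      with v have "R i b \<in> {0,1}" by blast
      thus ?thesis by auto
    qed
  qed (use assms(3) in auto)
  with s1 eq have "card ({1..k} \<inter> {j. R i j = 1}) \<le> 1" by linarith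
  hence "card ({1..k} \<inter> {j. R i j = 1}) = 0 \<or> card ({1..k} \<inter> {j. R i j = 1}) = 1" by linarith
  with eq show ?thesis by auto
qed

lemma poly_s:
  fixes y :: real assumes s1: "y \<ge> 1"
  shows "1 - 1/(2 * y) \<le> y * y - 1 + 1/(2 * y)" and "y * y - 1 + 1/(2 * y) \<ge> 1/2"
proof -
  have p: "(2 * y-1)*(y-1) \<ge> 0" using s1 by (intro mult_nonneg_nonneg) auto
  hence p2: "2 * y * y - 3 * y + 1 \<ge> 0" by (simp add: algebra_simps)
  have q: "(y-1)*(y-1) \<ge> 0" by simp
  hence q2: "y * y \<ge> 2 * y - 1" by (simp add: algebra_simps)
  have sp: "y > 0" using s1 by simp
  have "(2 * y * y - 3 * y + 1) / y \<ge> 0" using p2 sp by simp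
  hence "2 * y - 3 + 1/y \<ge> 0" using sp by (simp add: field_simps)
  hence "y * y - 2 + 1/y \<ge> 0" using q2 by linarith
  moreover have "1/(2 * y) = (1/y)/2" by simp
  ultimately show "1 - 1/(2 * y) \<le> y * y - 1 + 1/(2 * y)" by linarith
  have "(2 * y * y - 3 * y + 1) / (2 * y) \<ge> 0" using p2 sp by simp
  hence "y - 3/2 + 1/(2 * y) \<ge> 0" using sp by (simp add: field_simps)
  moreover have "y * y \<ge> y" using s1 by simp
  ultimately show "y * y - 1 + 1/(2 * y) \<ge> 1/2" by linarith
qed
lemma ln2_ge: "ln (2::real) \<ge> 1/3"
proof -
  have "exp (1/3::real) \<le> 1 + 1/3 + (1/3)\<^sup>2" by (rule exp_bound) auto
  also have "\<dots> \<le> 2" by (simp add: power2_eq_square)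
  finally have "ln (exp (1/3::real)) \<le> ln 2" by (subst ln_le_cancel_iff) auto
  thus ?thesis by simp
qed

theorem proposition6p1:
  fixes m n p :: nat and c \<delta> :: real
    and P :: "nat \<Rightarrow> nat \<Rightarrow> real" and U :: "nat \<Rightarrow> nat \<Rightarrow> nat"
    and R :: "nat \<Rightarrow> nat \<Rightarrow> real" and D :: "nat \<Rightarrow> nat set pmf"
  assumes "c > 1"
    and "\<forall>i\<in>{1..m}. \<forall>l\<in>{1..p}. 0 \<le> P i l \<and> P i l \<le> 1"
    and "\<forall>k\<in>{1..n}. \<forall>l\<in>{1..p}. U k l \<ge> 1"
    and "0 < \<delta>" and "\<delta> \<le> 1"
    and "noise_model m p P D"
    and "is_ranking m n R"
    and "\<forall>l\<in>{1..p}. \<forall>k\<in>{1..n}.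
           (\<Sum>i\<in>{1..m}. \<Sum>j\<in>{1..k}. P i l * R i j)
             \<le> real (U k l) * (1 + (1 - 1 / (2 * sqrt c)) * gamma n p U \<delta> k)"
  shows "satisfies_constraint m n p U R D (\<lambda>k. c * gamma n p U \<delta> k) \<delta>"
proof -
  note c = assms(1) and Pb = assms(2) and U1 = assms(3) and d0 = assms(4) and d1 = assms(5)
    and nm = assms(6) and rk = assms(7) and hyp = assms(8)
  define G where "G = groups_dist m D"
  define L where "L = ln (2 * real n * real p / \<delta>)"
  define a' where "a' = 1 - 1 / (2 * sqrt c)"
  define b where "b = c - 1 + 1 / (2 * sqrt c)"
  define thr where "thr k l = real (U k l) * (1 + c * gamma n p U \<delta> k)" for k l
  define X where "X \<omega> k l = (\<Sum>i\<in>group_of m \<omega> l. \<Sum>j\<in>{1..k}. R i j)" for \<omega> k l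
  define B where "B k l = {\<omega>. X \<omega> k l > thr k l}" for k l
  have sc: "sqrt c \<ge> 1" using c by simp
  have ab: "a' \<le> b" and b12: "b \<ge> 1/2"
  proof -
    have ss: "sqrt c * sqrt c = c" using c by simp
    show "a' \<le> b" "b \<ge> 1/2" using poly_s[OF sc, unfolded ss] unfolding a'_def b_def by simp_all
  qed
  have per: "measure_pmf.prob G (B k l) \<le> \<delta> / (2 * real n * real p)"
    if k: "k \<in> {1..n}" and l: "l \<in> {1..p}" for k l
  proof -
    have np: "real n \<ge> 1" "real p \<ge> 1" using k l by auto
    have Ukl: "real (U k l) \<ge> 1" using U1 k l by auto
    have L3: "L \<ge> 1/3"
    proof -
      have "2 * real n * real p / \<delta> \<ge> 2"
      proof -
        have "real n * real p \<ge> 1 * 1" using np by (intro mult_mono) auto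
        hence "2 * real n * real p \<ge> 2" by simp
        hence "2 * real n * real p \<ge> 2 * \<delta>" using d1 by linarith
        thus ?thesis using d0 by (simp add: field_simps)
      qed
      hence "ln 2 \<le> L" unfolding L_def by (subst ln_le_cancel_iff) auto
      with ln2_ge show ?thesis by linarith
    qed
    define g where "g = gamma n p U \<delta> k"
    have gge: "g \<ge> 12 * L * sqrt (1 / real (U k l))"
    proof -
      have "sqrt (1 / real (U k l)) \<le> Max ((\<lambda>l. sqrt (1 / real (U k l))) ` {1..p})"
        using l by (intro Max_ge) auto
      thus ?thesis unfolding g_def gamma_def L_def[symmetric] using L3
        by (intro mult_left_mono) auto
    qed
    have g0: "g > 0"
    proof -
      have "12 * L * sqrt (1 / real (U k l)) > 0" using L3 Ukl by auto
      with gge show ?thesis by linarith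
    qed
    define h where "h = b * g"
    have h0: "h > 0" using g0 b12 by (simp add: h_def)
    have th: "sqrt (real (U k l)) * h \<ge> 6 * L"
    proof -
      have "b * g \<ge> (1/2) * (12 * L * sqrt (1 / real (U k l)))"
        using b12 gge g0 L3 by (intro mult_mono) auto
      hence "sqrt (real (U k l)) * h \<ge> sqrt (real (U k l)) * ((1/2) * (12 * L * sqrt (1 / real (U k l))))"
        unfolding h_def by (intro mult_left_mono) auto
      also have "sqrt (real (U k l)) * ((1/2) * (12 * L * sqrt (1 / real (U k l))))
          = 6 * L * (sqrt (real (U k l)) * sqrt (1 / real (U k l)))" by simp
      also have "sqrt (real (U k l)) * sqrt (1 / real (U k l)) = 1"
        using Ukl by (simp add: real_sqrt_mult[symmetric])
      finally show ?thesis by simp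
    qed
    define a where "a i = (\<Sum>j\<in>{1..k}. R i j)" for i
    have a01: "\<forall>i\<in>{1..m}. a i \<in> {0,1}"
      using ranking_prefix01[OF rk] k unfolding a_def by auto
    have Xeq: "X \<omega> k l = (\<Sum>i\<in>{1..m}. if l \<in> \<omega> i then a i else 0)" for \<omega>
      unfolding X_def group_of_def a_def by (rule sum.inter_filter) simp
    define S where "S = (\<Sum>i\<in>{1..m}. measure_pmf.prob (D i) {S. l\<in>S} * a i)"
    have Seq: "S = (\<Sum>i\<in>{1..m}. \<Sum>j\<in>{1..k}. P i l * R i j)"
      unfolding S_def a_def using nm l unfolding noise_model_def
      by (intro sum.cong) (auto simp: sum_distrib_left)
    have a0: "a i \<ge> 0" if "i \<in> {1..m}" for i
    proof -
      have "a i \<in> {0,1}" using a01 that by blast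
      thus ?thesis by auto
    qed
    have S0: "S \<ge> 0" unfolding S_def using a0 by (intro sum_nonneg mult_nonneg_nonneg) auto
    have Sle: "S \<le> real (U k l) * (1 + a' * g)"
      using hyp k l unfolding Seq a'_def g_def by auto
    have MU: "S \<le> real (U k l) * (1 + h)"
    proof -
      have "a' * g \<le> b * g" using ab g0 by (intro mult_right_mono) auto
      hence "real (U k l) * (1 + a' * g) \<le> real (U k l) * (1 + h)" unfolding h_def
        using Ukl by (intro mult_left_mono) auto
      with Sle show ?thesis by linarith
    qed
    have xM: "thr k l - S \<ge> real (U k l) * h"
    proof -
      have "thr k l - real (U k l) * (1 + a' * g) = real (U k l) * h"
        unfolding thr_def h_def b_def a'_def g_def by (simp add: algebra_simps)
      with Sle show ?thesis by linarith
    qed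
    have "measure_pmf.prob G (B k l)
        = measure_pmf.prob (Pi_pmf {1..m} {} D) {\<omega>. (\<Sum>i\<in>{1..m}. if l \<in> \<omega> i then a i else 0) > thr k l}"
      unfolding G_def groups_dist_def B_def Xeq ..
    also have "\<dots> \<le> exp (S * (exp (h / (2 * (1 + h))) - 1) - (h / (2 * (1 + h))) * thr k l)"
      unfolding S_def using h0 a01 by (intro chernoff_Pi) auto
    also have "\<dots> \<le> exp (- L)"
      using arith_bound[OF Ukl h0 L3 th S0 MU xM] by simp
    also have "exp (- L) = \<delta> / (2 * real n * real p)"
      unfolding L_def using np d0 by (simp add: exp_minus)
    finally show ?thesis .
  qed
  let ?I = "{1..n} \<times> {1..p}"
  have "measure_pmf.prob G (\<Union>kl\<in>?I. B (fst kl) (snd kl)) \<le> (\<Sum>kl\<in>?I. measure_pmf.prob G (B (fst kl) (snd kl)))"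
    by (rule measure_pmf.finite_measure_subadditive_finite) auto
  also have "\<dots> \<le> (\<Sum>kl\<in>?I. \<delta> / (2 * real n * real p))"
    by (intro sum_mono) (auto intro!: per)
  also have "\<dots> = real (n * p) * (\<delta> / (2 * real n * real p))" by simp
  also have "\<dots> \<le> \<delta>"
  proof (cases "n * p = 0")
    case False
    then show ?thesis using d0 by (simp add: field_simps)
  qed (use d0 in simp)
  finally have bad: "measure_pmf.prob G (\<Union>kl\<in>?I. B (fst kl) (snd kl)) \<le> \<delta>" .
  have eqs: "{\<omega>. \<forall>k\<in>{1..n}. \<forall>l\<in>{1..p}.
           (\<Sum>i\<in>group_of m \<omega> l. \<Sum>j\<in>{1..k}. R i j) \<le> real (U k l) * (1 + c * gamma n p U \<delta> k)}
      = space (measure_pmf G) - (\<Union>kl\<in>?I. B (fst kl) (snd kl))"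
    unfolding B_def X_def thr_def by (force simp: not_less)
  show ?thesis
    unfolding satisfies_constraint_def G_def[symmetric] eqs
    using bad by (subst measure_pmf.prob_compl) auto
qed
end
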